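(* Let $G$ be a countable group and $\nu$ a probability measure of full support on $G$; let $(z_1,z_2,\ldots)$, $z_n = x_1\cdots x_n$, denote a trajectory of the $\nu$-random walk. Let $W_i, W'_i\subseteq G$, $i\in\mathbb N$, be subsets with $W'_i\subseteq W_i$ for all $i$ and $W_i\cap W_j=\varnothing$ for $i\neq j$. For $g\in G$ let $\mathrm{rank}(g)=i$ if $g\in W_i$ and $\mathrm{rank}(g)=0$ if $g\notin\bigcup_i W_i$. Let $p:\bigcup_{i}W_i\to G$ be a function. Assume: (1) $\mathrm{rank}(p(g))<\mathrm{rank}(g)$ for every $g\in\bigcup_i W_i$; (2) for every $h\in G$ there is $N$ such that for all $i>N$ we have $hW'_i\subseteq W_i$ and $p(hw)=h\,p(w)$ for all $w\in W'_i$; (3) for almost every trajectory $(z_1,z_2,\ldots)$ there is $i_0$ such that for every $i>i_0$ there is $j$ with $z_i\in W'_j$; (4) for almost every trajectory there is $i_0$ such that for all $i>i_0$, either $p(z_{i+1})=p(z_i)$ or $p(z_{i+1})=z_i$; (5) for almost every trajectory the sequence $(\mathrm{rank}(z_i))_i$ is unbounded. Then the Poisson–Furstenberg boundary $\partial(G,\nu)$ is non-trivial, and moreover the action of $G$ on $\partial(G,\nu)$ is essentially free.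
   Context: The Poisson–Furstenberg boundary $\partial(G,\nu)$ is the space of ergodic components of the time shift on the space $G^{\mathbb N}$ of trajectories of the $\nu$-random walk (for non-degenerate $\nu$ equivalently the tail boundary), with $G$ acting by left multiplication on trajectories. Essentially free means that for each $h\neq 1$, almost every boundary point is not fixed by $h$. *)

theory Defs
  imports "HOL-Probability.Probability"
begin

text \<open>The group G is a type of class group_add (not necessarily commutative;
  the group operation is written +, the identity 0, inverses -) that is countable.\<close>

text \<open>Position of the random walk: rw_pos x n = x 0 + x 1 + ... + x n,
  i.e. rw_pos x (n-1) is z_n = x_1 ... x_n of the paper (0-based indexing).\<close>
fun rw_pos :: "(nat \<Rightarrow> 'g::group_add) \<Rightarrow> nat \<Rightarrow> 'g" where
  "rw_pos x 0 = x 0"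
| "rw_pos x (Suc n) = rw_pos x n + x (Suc n)"

definition traj_space :: "(nat \<Rightarrow> 'g::countable) measure" where
  "traj_space = PiM UNIV (\<lambda>_::nat. count_space UNIV)"

definition rw_traj :: "'g::{group_add,countable} pmf \<Rightarrow> (nat \<Rightarrow> 'g) measure" where
  "rw_traj \<nu> = distr (PiM UNIV (\<lambda>_::nat. measure_pmf \<nu>)) traj_space rw_pos"

text \<open>Shift-invariant events; the Poisson--Furstenberg boundary is the space of
  ergodic components of the shift, i.e. its measure algebra is that of these events.\<close>
definition shift_invariant_sets :: "(nat \<Rightarrow> 'g::countable) set set" where
  "shift_invariant_sets = {A \<in> sets traj_space. (\<lambda>z. z \<circ> Suc) -` A = A}"

text \<open>Left translation of an event by h: h A = {(h + z n)_n | z \<in> A}.\<close>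
definition left_translate :: "'g::group_add \<Rightarrow> (nat \<Rightarrow> 'g) set \<Rightarrow> (nat \<Rightarrow> 'g) set" where
  "left_translate h A = (\<lambda>z n. - h + z n) -` A"

definition poisson_boundary_nontrivial :: "'g::{group_add,countable} pmf \<Rightarrow> bool" where
  "poisson_boundary_nontrivial \<nu> \<longleftrightarrow>
     (\<exists>A \<in> shift_invariant_sets. 0 < measure (rw_traj \<nu>) A \<and> measure (rw_traj \<nu>) A < 1)"

text \<open>h fixes (pointwise) the part E of the boundary: E has positive measure and
  h acts trivially (mod null sets) on every boundary event contained in E.\<close>
definition boundary_fixed_part :: "'g::{group_add,countable} pmf \<Rightarrow> 'g \<Rightarrow> (nat \<Rightarrow> 'g) set \<Rightarrow> bool" where
  "boundary_fixed_part \<nu> h E \<longleftrightarrow> E \<in> shift_invariant_sets \<and> 0 < measure (rw_traj \<nu>) E \<and>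
     (\<forall>B \<in> shift_invariant_sets. B \<subseteq> E \<longrightarrow>
        measure (rw_traj \<nu>) ((left_translate h B - B) \<union> (B - left_translate h B)) = 0)"

definition boundary_action_essentially_free :: "'g::{group_add,countable} pmf \<Rightarrow> bool" where
  "boundary_action_essentially_free \<nu> \<longleftrightarrow>
     (\<forall>h. h \<noteq> 0 \<longrightarrow> \<not> (\<exists>E. boundary_fixed_part \<nu> h E))"

definition rank :: "(nat \<Rightarrow> 'g set) \<Rightarrow> 'g \<Rightarrow> nat" where
  "rank W g = (if \<exists>i\<ge>1. g \<in> W i then (THE i. 1 \<le> i \<and> g \<in> W i) else 0)"

end

theory Submission
  imports Defs
begin


lemma space_traj[simp]: "space traj_space = UNIV"
  unfolding traj_space_def by (simp add: space_PiM)

lemma sets_rw_traj[simp]: "sets (rw_traj \<nu>) = sets traj_space"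
  unfolding rw_traj_def by simp

lemma space_rw_traj[simp]: "space (rw_traj \<nu>) = UNIV"
  unfolding rw_traj_def by simp

lemma meas_coord: "(\<lambda>z. z i) \<in> traj_space \<rightarrow>\<^sub>M count_space UNIV"
  unfolding traj_space_def by (rule measurable_component_singleton) simp

lemma sets_coord: "{z. z i \<in> S} \<in> sets traj_space"
proof -
  have "{z. z i \<in> S} = (\<lambda>z. z i) -` S \<inter> space traj_space" by auto
  then show ?thesis using measurable_sets[OF meas_coord, of S i] by simp
qed

lemma meas_rw_pos_coord:
  fixes \<nu> :: "'g::{group_add,countable} pmf"
  shows "(\<lambda>x. rw_pos x n) \<in> PiM UNIV (\<lambda>_. measure_pmf \<nu>) \<rightarrow>\<^sub>M count_space UNIV"
proof (induction n)
  case 0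
  have "(\<lambda>x. x 0) \<in> PiM UNIV (\<lambda>_. measure_pmf \<nu>) \<rightarrow>\<^sub>M measure_pmf \<nu>"
    by (rule measurable_component_singleton) simp
  then show ?case by simp
next
  case (Suc n)
  have g: "(\<lambda>x. x (Suc n)) \<in> PiM UNIV (\<lambda>_. measure_pmf \<nu>) \<rightarrow>\<^sub>M measure_pmf \<nu>"
    by (rule measurable_component_singleton) simp
  have "(\<lambda>x. (\<lambda>i x. rw_pos x n + i) (x (Suc n)) x) \<in> PiM UNIV (\<lambda>_. measure_pmf \<nu>) \<rightarrow>\<^sub>M count_space UNIV"
  proof (rule measurable_compose_countable'[where I=UNIV and f="\<lambda>i x. rw_pos x n + i" and g="\<lambda>x. x (Suc n)"])
    fix i :: 'g
    show "(\<lambda>x. rw_pos x n + i) \<in> PiM UNIV (\<lambda>_. measure_pmf \<nu>) \<rightarrow>\<^sub>M count_space UNIV"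
      using measurable_compose[OF Suc measurable_count_space[of "\<lambda>y. y + i" UNIV]] by simp
  qed (use g in simp_all)
  then show ?case by simp
qed

lemma meas_rw_pos: "rw_pos \<in> PiM UNIV (\<lambda>_. measure_pmf \<nu>) \<rightarrow>\<^sub>M traj_space"
  unfolding traj_space_def
  by (rule measurable_PiM_single') (use meas_rw_pos_coord in auto)

lemma prob_rw: "prob_space (rw_traj \<nu>)"
  unfolding rw_traj_def
  by (rule prob_space.prob_space_distr[OF prob_space_PiM meas_rw_pos]) (rule prob_space_measure_pmf)

lemma meas_trans: "(\<lambda>z n. a + z n) \<in> traj_space \<rightarrow>\<^sub>M traj_space"
proof -
  have "(\<lambda>z n. a + z n) \<in> traj_space \<rightarrow>\<^sub>M PiM UNIV (\<lambda>_::nat. count_space UNIV)"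
  proof (rule measurable_PiM_single')
    fix n
    show "(\<lambda>z. a + z n) \<in> traj_space \<rightarrow>\<^sub>M count_space UNIV"
      using measurable_compose[OF meas_coord measurable_count_space[of "\<lambda>y. a + y" UNIV]] by simp
  qed auto
  then show ?thesis unfolding traj_space_def .
qed

lemma trans_sets: "B \<in> sets traj_space \<Longrightarrow> {z. (\<lambda>n. a + z n) \<in> B} \<in> sets traj_space"
  using measurable_sets[OF meas_trans, of B a] by (simp add: vimage_def)

lemma lt_eq: "left_translate h B = {z. (\<lambda>n. - h + z n) \<in> B}"
  unfolding left_translate_def by auto

definition ev_set :: "'g set \<Rightarrow> (nat \<Rightarrow> 'g) set" where
  "ev_set S = {z. \<exists>i0. \<forall>i>i0. z i \<in> S}"

lemma ev_set_sets: "ev_set (S::'g::countable set) \<in> sets traj_space"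
proof -
  have "ev_set S = (\<Union>i0\<in>UNIV. \<Inter>i\<in>{i0<..}. {z. z i \<in> S})"
    unfolding ev_set_def by auto
  also have "\<dots> \<in> sets traj_space"
  proof (rule sets.countable_UN, safe)
    fix i0 :: nat
    show "(\<Inter>i\<in>{i0<..}. {z. z i \<in> S}) \<in> sets traj_space"
    proof (rule sets.countable_INT)
      show "{i0<..} \<noteq> {}" by (metis greaterThan_iff lessI empty_iff)
    qed (auto simp: sets_coord)
  qed
  finally show ?thesis .
qed

lemma ev_set_inv: "ev_set (S::'g::countable set) \<in> shift_invariant_sets"
  unfolding shift_invariant_sets_def
proof (intro CollectI conjI ev_set_sets)
  show "(\<lambda>z. z \<circ> Suc) -` ev_set S = ev_set S"
  proof (intro set_eqI iffI)
    fix z assume "z \<in> (\<lambda>z. z \<circ> Suc) -` ev_set S"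
    then obtain i0 where i0: "\<forall>i>i0. z (Suc i) \<in> S" unfolding ev_set_def by auto
    have "\<forall>i>Suc i0. z i \<in> S"
    proof (intro allI impI)
      fix i assume "Suc i0 < i"
      then obtain j where "i = Suc j" "j > i0" by (cases i) auto
      then show "z i \<in> S" using i0 by simp
    qed
    then show "z \<in> ev_set S" unfolding ev_set_def by blast
  next
    fix z assume "z \<in> ev_set S"
    then obtain i0 where i0: "\<forall>i>i0. z i \<in> S" unfolding ev_set_def by auto
    then have "\<forall>i>i0. (z \<circ> Suc) i \<in> S" by simp
    then show "z \<in> (\<lambda>z. z \<circ> Suc) -` ev_set S" unfolding ev_set_def by blast
  qed
qed

lemma inv_Int: "A \<in> shift_invariant_sets \<Longrightarrow> B \<in> shift_invariant_sets \<Longrightarrow> A \<inter> B \<in> shift_invariant_sets"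
  unfolding shift_invariant_sets_def by auto

lemma inv_compl: "B \<in> shift_invariant_sets \<Longrightarrow> UNIV - B \<in> shift_invariant_sets"
proof -
  assume B: "B \<in> shift_invariant_sets"
  then have "B \<in> sets traj_space" unfolding shift_invariant_sets_def by auto
  then have "space traj_space - B \<in> sets traj_space" by (rule sets.compl_sets)
  then show ?thesis using B unfolding shift_invariant_sets_def by auto
qed

lemma inv_UNIV: "UNIV \<in> shift_invariant_sets"
  unfolding shift_invariant_sets_def using sets.top[of traj_space] by simp

lemma inv_iff: "B \<in> shift_invariant_sets \<Longrightarrow> (z \<circ> Suc \<in> B) = (z \<in> B)"
  unfolding shift_invariant_sets_def by (metis (mono_tags) CollectD vimage_eq)

lemma inv_trans: "B \<in> shift_invariant_sets \<Longrightarrow> {z. (\<lambda>n. a + z n) \<in> B} \<in> shift_invariant_sets"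
proof -
  assume B: "B \<in> shift_invariant_sets"
  have "(\<lambda>z. z \<circ> Suc) -` {z. (\<lambda>n. a + z n) \<in> B} = {z. (\<lambda>n. a + z n) \<in> B}"
  proof (intro set_eqI)
    fix z
    have e: "(\<lambda>n. a + (z \<circ> Suc) n) = (\<lambda>n. a + z n) \<circ> Suc" by auto
    show "z \<in> (\<lambda>z. z \<circ> Suc) -` {z. (\<lambda>n. a + z n) \<in> B} \<longleftrightarrow> z \<in> {z. (\<lambda>n. a + z n) \<in> B}"
      using inv_iff[OF B, of "\<lambda>n. a + z n"] by (simp add: e o_def)
  qed
  moreover have "B \<in> sets traj_space" using B unfolding shift_invariant_sets_def by auto
  ultimately show ?thesis unfolding shift_invariant_sets_def using trans_sets by blast
qed



lemma rw_pos_case_nat: "rw_pos (case_nat a y) (Suc n) = a + rw_pos y n"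
  by (induction n) (simp_all add: add.assoc)

lemma quasi:
  fixes \<nu> :: "'g::{group_add,countable} pmf"
  assumes full: "set_pmf \<nu> = UNIV"
    and B: "B \<in> shift_invariant_sets"
    and B0: "emeasure (rw_traj \<nu>) B = 0"
  shows "emeasure (rw_traj \<nu>) {z. (\<lambda>n. a + z n) \<in> B} = 0"
proof -
  interpret S: sequence_space "measure_pmf \<nu>"
    by unfold_locales
  let ?P = "PiM UNIV (\<lambda>_::nat. measure_pmf \<nu>)"
  define \<Phi> where "\<Phi> s y = (\<lambda>n. s + rw_pos y n)" for s :: 'g and y :: "nat \<Rightarrow> 'g"
  have Bs: "B \<in> sets traj_space" using B unfolding shift_invariant_sets_def by auto
  have mPhi: "\<Phi> s \<in> ?P \<rightarrow>\<^sub>M traj_space" for s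
    unfolding \<Phi>_def using measurable_comp[OF meas_rw_pos meas_trans[of s]] by (simp add: o_def)
  have fst_m: "fst \<in> measure_pmf \<nu> \<Otimes>\<^sub>M ?P \<rightarrow>\<^sub>M count_space UNIV"
    using measurable_fst[of "measure_pmf \<nu>" ?P] by simp
  have mPhi2: "(\<lambda>x. (\<lambda>s x. \<Phi> s (snd x)) (fst x) x) \<in> measure_pmf \<nu> \<Otimes>\<^sub>M ?P \<rightarrow>\<^sub>M traj_space"
  proof (rule measurable_compose_countable'[where I=UNIV, OF _ fst_m])
    fix s show "(\<lambda>x. \<Phi> s (snd x)) \<in> measure_pmf \<nu> \<Otimes>\<^sub>M ?P \<rightarrow>\<^sub>M traj_space"
      using measurable_comp[OF measurable_snd mPhi[of s]] by (simp add: o_def)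
  qed simp
  define X where "X = {x \<in> space (measure_pmf \<nu> \<Otimes>\<^sub>M ?P). \<Phi> (fst x) (snd x) \<in> B}"
  have X: "X \<in> sets (measure_pmf \<nu> \<Otimes>\<^sub>M ?P)"
    unfolding X_def using measurable_sets[OF mPhi2 Bs] by (simp add: vimage_def Int_def conj_commute)
  have "emeasure (rw_traj \<nu>) B = emeasure ?P (rw_pos -` B \<inter> space ?P)"
    unfolding rw_traj_def by (rule emeasure_distr[OF meas_rw_pos]) (simp add: Bs)
  also have "\<dots> = emeasure (distr (measure_pmf \<nu> \<Otimes>\<^sub>M ?P) ?P (\<lambda>(s, \<omega>). case_nat s \<omega>)) (rw_pos -` B \<inter> space ?P)"
    by (simp add: S.PiM_iter)
  also have "\<dots> = emeasure (measure_pmf \<nu> \<Otimes>\<^sub>M ?P) ((\<lambda>(s, \<omega>). case_nat s \<omega>) -` (rw_pos -` B \<inter> space ?P) \<inter> space (measure_pmf \<nu> \<Otimes>\<^sub>M ?P))"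
  proof (rule emeasure_distr)
    have "(\<lambda>x. case_nat (fst x) (snd x)) \<in> measure_pmf \<nu> \<Otimes>\<^sub>M ?P \<rightarrow>\<^sub>M ?P"
      by (rule measurable_case_nat') (rule measurable_fst, rule measurable_snd)
    then show "(\<lambda>(s, \<omega>). case_nat s \<omega>) \<in> measure_pmf \<nu> \<Otimes>\<^sub>M ?P \<rightarrow>\<^sub>M ?P"
      by (simp add: split_beta')
    show "rw_pos -` B \<inter> space ?P \<in> sets ?P" using measurable_sets[OF meas_rw_pos Bs] .
  qed
  also have "(\<lambda>(s, \<omega>). case_nat s \<omega>) -` (rw_pos -` B \<inter> space ?P) \<inter> space (measure_pmf \<nu> \<Otimes>\<^sub>M ?P) = X"
  proof -
    have "rw_pos (case_nat s \<omega>) \<in> B \<longleftrightarrow> \<Phi> s \<omega> \<in> B" for s \<omega>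
    proof -
      have "rw_pos (case_nat s \<omega>) \<circ> Suc = \<Phi> s \<omega>"
        by (rule ext) (simp only: comp_apply \<Phi>_def rw_pos_case_nat)
      then show ?thesis using inv_iff[OF B, of "rw_pos (case_nat s \<omega>)"] by simp
    qed
    then show ?thesis unfolding X_def by (auto simp: space_pair_measure space_PiM)
  qed
  also have "emeasure (measure_pmf \<nu> \<Otimes>\<^sub>M ?P) X = (\<integral>\<^sup>+s. emeasure ?P (Pair s -` X) \<partial>measure_pmf \<nu>)"
    by (rule S.emeasure_pair_measure_alt[OF X])
  also have "\<dots> = (\<integral>\<^sup>+s. emeasure (rw_traj \<nu>) {z. (\<lambda>n. s + z n) \<in> B} \<partial>measure_pmf \<nu>)"
  proof (rule nn_integral_cong)
    fix s
    have "Pair s -` X = rw_pos -` {z. (\<lambda>n. s + z n) \<in> B} \<inter> space ?P"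
      unfolding X_def \<Phi>_def by (auto simp: space_pair_measure space_PiM)
    moreover have "emeasure (rw_traj \<nu>) {z. (\<lambda>n. s + z n) \<in> B} = emeasure ?P (rw_pos -` {z. (\<lambda>n. s + z n) \<in> B} \<inter> space ?P)"
      unfolding rw_traj_def by (rule emeasure_distr[OF meas_rw_pos]) (simp add: trans_sets Bs)
    ultimately show "emeasure ?P (Pair s -` X) = emeasure (rw_traj \<nu>) {z. (\<lambda>n. s + z n) \<in> B}" by simp
  qed
  finally have "(\<integral>\<^sup>+s. emeasure (rw_traj \<nu>) {z. (\<lambda>n. s + z n) \<in> B} \<partial>measure_pmf \<nu>) = 0"
    using B0 by simp
  then have "AE s in measure_pmf \<nu>. emeasure (rw_traj \<nu>) {z. (\<lambda>n. s + z n) \<in> B} = 0"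
    by (subst (asm) nn_integral_0_iff_AE) simp_all
  then show ?thesis using full by (simp add: AE_measure_pmf_iff)
qed



inductive anc :: "('g \<Rightarrow> 'g) \<Rightarrow> ('g \<Rightarrow> nat) \<Rightarrow> 'g \<Rightarrow> 'g \<Rightarrow> bool" for p r where
  anc_base: "0 < r g \<Longrightarrow> anc p r g (p g)"
| anc_step: "0 < r g \<Longrightarrow> anc p r (p g) c \<Longrightarrow> anc p r g c"

lemma anc_rank:
  assumes R1: "\<And>g. 0 < r g \<Longrightarrow> r (p g) < r g"
  shows "anc p r g c \<Longrightarrow> r c < r g"
proof (induction rule: anc.induct)
  case (anc_base g) then show ?case using R1 by simp
next
  case (anc_step g c) then show ?case using R1[of g] by linarith
qed

lemma anc_inj:
  assumes R1: "\<And>g. 0 < r g \<Longrightarrow> r (p g) < r g"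
  shows "anc p r g c1 \<Longrightarrow> anc p r g c2 \<Longrightarrow> r c1 = r c2 \<Longrightarrow> c1 = c2"
proof (induction arbitrary: c2 rule: anc.induct)
  case (anc_base g)
  note P = anc_base.prems
  from P(1) show ?case
  proof cases
    case anc_base then show ?thesis by simp
  next
    case anc_step
    have "r c2 < r (p g)" using anc_rank[of r p, OF R1 anc_step(2)] .
    with P(2) show ?thesis by simp
  qed
next
  case (anc_step g c)
  note P = anc_step.prems and H = anc_step.hyps and IH = anc_step.IH
  from P(1) show ?case
  proof cases
    case anc_base
    have "r c < r (p g)" using anc_rank[of r p, OF R1 H(2)] .
    with P(2) anc_base show ?thesis by simp
  next
    case anc_step
    then show ?thesis using IH P(2) by blast
  qed
qed

lemma anc_mono:
  assumes "0 < r y" "0 < r x" "p y = p x \<or> p y = x" "anc p r x c"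
  shows "anc p r y c"
  using assms(3)
proof
  assume e: "p y = p x"
  from assms(4) show ?thesis
  proof cases
    case anc_base
    have "anc p r y (p y)" using assms(1) by (rule anc.intros(1))
    then show ?thesis using e anc_base by simp
  next
    case anc_step
    have "anc p r (p y) c" using e anc_step(2) by simp
    with assms(1) show ?thesis by (rule anc.intros(2))
  qed
next
  assume e: "p y = x"
  have "anc p r (p y) c" using e assms(4) by simp
  with assms(1) show ?thesis by (rule anc.intros(2))
qed

lemma unbounded_nat:
  fixes f :: "nat \<Rightarrow> nat"
  assumes "\<not> bdd_above (range f)"
  shows "\<exists>i>n. M < f i"
proof -
  let ?M = "max M (Max (f ` {..n}))"
  have "\<not> (\<forall>i. f i \<le> ?M)" using assms bdd_aboveI2[of UNIV f ?M] by auto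
  then obtain i where i: "?M < f i" by (auto simp: not_le)
  have "n < i"
  proof (rule ccontr)
    assume "\<not> n < i"
    then have "i \<in> {..n}" by simp
    with i show False by auto
  qed
  with i show ?thesis by auto
qed

lemma det:
  fixes p :: "'g::group_add \<Rightarrow> 'g" and r :: "'g \<Rightarrow> nat" and Wp :: "nat \<Rightarrow> 'g set"
  assumes R1: "\<And>g. 0 < r g \<Longrightarrow> r (p g) < r g"
    and R2: "\<And>g j. 1 \<le> j \<Longrightarrow> g \<in> Wp j \<Longrightarrow> r g = j"
    and R3: "\<And>w j. N < j \<Longrightarrow> w \<in> Wp j \<Longrightarrow> r (h + w) = r w \<and> p (h + w) = h + p w"
    and h: "h \<noteq> 0"
    and G3: "\<exists>i0. \<forall>i>i0. \<exists>j\<ge>1. z i \<in> Wp j"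
    and G4: "\<exists>i0. \<forall>i>i0. p (z (Suc i)) = p (z i) \<or> p (z (Suc i)) = z i"
    and G5: "\<not> bdd_above (range (\<lambda>i. r (z i)))"
    and EQ: "\<forall>c. (z \<in> ev_set {g. anc p r g c} \<longleftrightarrow> (\<lambda>n. h + z n) \<in> ev_set {g. anc p r g c}) \<and>
                 (z \<in> ev_set {g. p g = c} \<longleftrightarrow> (\<lambda>n. h + z n) \<in> ev_set {g. p g = c})"
  shows False
proof -
  from G3 obtain i3 where i3: "\<forall>i>i3. \<exists>j\<ge>1. z i \<in> Wp j" by blast
  from G4 obtain i4 where i4: "\<forall>i>i4. p (z (Suc i)) = p (z i) \<or> p (z (Suc i)) = z i" by blast
  define i0 where "i0 = max i3 i4"
  define a where "a i = p (z i)" for i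
  have W: "z i \<in> Wp (r (z i)) \<and> 0 < r (z i)" if "i > i0" for i
  proof -
    from i3 that obtain j where "j \<ge> 1" "z i \<in> Wp j" unfolding i0_def by auto
    with R2[OF this] show ?thesis by auto
  qed
  have S1: "a (Suc i) = a i \<or> a (Suc i) = z i" if "i > i0" for i
    using i4 that unfolding a_def i0_def by auto
  have S3: "r (a i) < r (z i)" if "i > i0" for i
    using R1 W[OF that] unfolding a_def by auto
  have UB: "\<exists>i>n. M < r (z i)" for n M
    using unbounded_nat[OF G5] by blast
  have R3': "r (h + z i) = r (z i) \<and> p (h + z i) = h + a i" if "i > i0" "N < r (z i)" for i
    using R3[OF that(2)] W[OF that(1)] unfolding a_def by auto
  show False
  proof (cases "\<exists>c i1. \<forall>i>i1. a i = c")
    case True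
    then obtain c i1 where c: "\<forall>i>i1. a i = c" by blast
    then have "z \<in> ev_set {g. p g = c}" unfolding ev_set_def a_def by auto
    with EQ have "(\<lambda>n. h + z n) \<in> ev_set {g. p g = c}" by blast
    then obtain i2 where i2: "\<forall>i>i2. p (h + z i) = c" unfolding ev_set_def by auto
    obtain i where i: "i > max i0 (max i1 i2)" "N < r (z i)" using UB by blast
    then have "p (h + z i) = h + c" using R3' c by auto
    moreover have "p (h + z i) = c" using i2 i by auto
    ultimately have "h + c = 0 + c" by simp
    then have "h = 0" by (simp only: add_right_cancel)
    then show False using h by simp
  next
    case False
    have ch: "\<exists>k>n. a (Suc k) \<noteq> a k" for n
    proof (rule ccontr)
      assume "\<not> (\<exists>k>n. a (Suc k) \<noteq> a k)"
      then have A: "\<forall>k>n. a (Suc k) = a k" by blast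
      have B: "a i = a (Suc n)" if "Suc n \<le> i" for i
        using that
      proof (induction i rule: dec_induct)
        case (step k)
        have "a (Suc k) = a k" using A step(1) by simp
        then show ?case using step(3) by simp
      qed simp
      have "\<forall>i>n. a i = a (Suc n)"
      proof (intro allI impI)
        fix i assume "n < i"
        then have "Suc n \<le> i" by simp
        then show "a i = a (Suc n)" by (rule B)
      qed
      then have "\<exists>c i1. \<forall>i>i1. a i = c" by blast
      with False show False by blast
    qed
    have mono1: "r (a i) \<le> r (a (Suc i))" if "i > i0" for i
      using S1[OF that] S3[OF that] by (metis less_imp_le order_refl)
    have mono: "r (a i) \<le> r (a j)" if "i0 < i" "i \<le> j" for i j
      using that(2)
    proof (induction j rule: dec_induct)
      case (step k)
      have "i0 < k" using step(1) that(1) by simp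
      then show ?case using mono1[of k] step(3) by simp
    qed simp
    have grow: "\<exists>i1. \<forall>i>i1. M \<le> r (a i)" for M
    proof (induction M)
      case (Suc M)
      then obtain i1 where i1: "\<forall>i>i1. M \<le> r (a i)" by blast
      obtain k where k: "k > max i0 i1" "a (Suc k) \<noteq> a k" using ch by blast
      have ki0: "k > i0" using k(1) by simp
      then have "a (Suc k) = z k" using S1[OF ki0] k(2) by simp
      then have "r (a k) < r (a (Suc k))" using S3[OF ki0] by simp
      have "Suc M \<le> r (a i)" if "i > k" for i
      proof -
        have "r (a (Suc k)) \<le> r (a i)" using mono[of "Suc k" i] that ki0 by simp
        moreover have "M \<le> r (a k)" using i1 k(1) by simp
        ultimately show ?thesis using \<open>r (a k) < r (a (Suc k))\<close> by linarith
      qed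
      then show ?case by blast
    qed simp
    obtain i1 where i1: "\<forall>i>i1. N \<le> r (a i)" using grow by blast
    define T where "T = max i0 i1"
    have big: "N < r (z i)" if "i > T" for i
    proof -
      have "N \<le> r (a i)" using i1 that unfolding T_def by auto
      moreover have "r (a i) < r (z i)" using S3[of i] that unfolding T_def by auto
      ultimately show ?thesis by linarith
    qed
    obtain k where k: "k > T" "a (Suc k) \<noteq> a k" using ch by blast
    then have ak: "a (Suc k) = z k" using S1 unfolding T_def by auto
    have C1: "anc p r (z i) (z k)" if "Suc k \<le> i" for i
      using that
    proof (induction i rule: dec_induct)
      case base
      then show ?case using ak W[of "Suc k"] k anc_base[of r "z (Suc k)" p] unfolding a_def T_def by auto
    next
      case (step i)
      then show ?case using anc_mono[of r "z (Suc i)" "z i" p] W[of i] W[of "Suc i"] S1[of i] k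
        unfolding a_def T_def by auto
    qed
    have C2: "anc p r (h + z i) (h + z k)" if "Suc k \<le> i" for i
      using that
    proof (induction i rule: dec_induct)
      case base
      have "p (h + z (Suc k)) = h + z k" "0 < r (h + z (Suc k))"
        using R3'[of "Suc k"] big[of "Suc k"] ak W[of "Suc k"] k unfolding T_def by auto
      then show ?case using anc_base[of r "h + z (Suc k)" p] by metis
    next
      case (step i)
      have "p (h + z (Suc i)) = h + a (Suc i)" "p (h + z i) = h + a i"
        "0 < r (h + z (Suc i))" "0 < r (h + z i)"
        using R3'[of "Suc i"] R3'[of i] big[of "Suc i"] big[of i] W[of i] W[of "Suc i"] step k
        unfolding T_def by auto
      moreover have "a (Suc i) = a i \<or> a (Suc i) = z i" using S1[of i] step k unfolding T_def by auto
      ultimately show ?case using anc_mono[of r "h + z (Suc i)" "h + z i" p] step by auto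
    qed
    have "z \<in> ev_set {g. anc p r g (z k)}" unfolding ev_set_def using C1 by (auto intro!: exI[of _ k])
    with EQ have "(\<lambda>n. h + z n) \<in> ev_set {g. anc p r g (z k)}" by blast
    then obtain i2 where i2: "\<forall>i>i2. anc p r (h + z i) (z k)" unfolding ev_set_def by auto
    define i where "i = Suc (max k i2)"
    have A1: "anc p r (h + z i) (z k)" using i2 unfolding i_def by auto
    have A2: "anc p r (h + z i) (h + z k)" using C2 unfolding i_def by auto
    have "r (h + z k) = r (z k)" using R3'[of k] big[of k] k unfolding T_def by auto
    with anc_inj[OF R1 A2 A1] have "h + z k = 0 + z k" by simp
    then have "h = 0" by (simp only: add_right_cancel)
    then show False using h by simp
  qed
qed

lemma null_D:
  assumes "D \<in> sets M" "D \<subseteq> X \<union> Y" "X \<in> null_sets M" "Y \<in> null_sets M"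
  shows "measure M D = 0"
proof -
  have "X \<union> Y \<in> null_sets M" using assms by auto
  then have "D \<in> null_sets M" using assms null_sets_subset by blast
  then show ?thesis by (simp add: measure_def null_setsD1)
qed

theorem lemma1:
  fixes \<nu> :: "'g::{group_add,countable} pmf"
    and W W' :: "nat \<Rightarrow> 'g set"
    and p :: "'g \<Rightarrow> 'g"
  assumes full_support: "set_pmf \<nu> = UNIV"
    and sub: "\<forall>i\<ge>1. W' i \<subseteq> W i"
    and disj: "\<forall>i\<ge>1. \<forall>j\<ge>1. i \<noteq> j \<longrightarrow> W i \<inter> W j = {}"
    and A1: "\<forall>g \<in> (\<Union>i\<in>{1..}. W i). rank W (p g) < rank W g"
    and A2: "\<forall>h. \<exists>N. \<forall>i>N. (\<lambda>w. h + w) ` W' i \<subseteq> W i \<and> (\<forall>w\<in>W' i. p (h + w) = h + p w)"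
    and A3: "AE z in rw_traj \<nu>. \<exists>i0. \<forall>i>i0. \<exists>j\<ge>1. z i \<in> W' j"
    and A4: "AE z in rw_traj \<nu>. \<exists>i0. \<forall>i>i0. p (z (Suc i)) = p (z i) \<or> p (z (Suc i)) = z i"
    and A5: "AE z in rw_traj \<nu>. \<not> bdd_above (range (\<lambda>i. rank W (z i)))"
  shows "poisson_boundary_nontrivial \<nu> \<and> boundary_action_essentially_free \<nu>"
proof -
  let ?P = "rw_traj \<nu>"
  interpret P: prob_space ?P by (rule prob_rw)
  have rank_eq: "rank W g = j" if "1 \<le> j" "g \<in> W j" for g j
  proof -
    have ex: "\<exists>i\<ge>1. g \<in> W i" using that by blast
    have "(THE i. 1 \<le> i \<and> g \<in> W i) = j"
    proof (rule the_equality)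
      show "1 \<le> j \<and> g \<in> W j" using that by simp
      fix i assume i: "1 \<le> i \<and> g \<in> W i"
      show "i = j"
      proof (rule ccontr)
        assume "i \<noteq> j"
        then have "W i \<inter> W j = {}" using disj i that(1) by blast
        then show False using i that(2) by blast
      qed
    qed
    then show ?thesis unfolding rank_def using ex by simp
  qed
  have R1: "rank W (p g) < rank W g" if "0 < rank W g" for g
  proof -
    have "\<exists>i\<ge>1. g \<in> W i"
    proof (rule ccontr)
      assume "\<not> (\<exists>i\<ge>1. g \<in> W i)"
      then have "rank W g = 0" unfolding rank_def by auto
      with that show False by simp
    qed
    then have "g \<in> (\<Union>i\<in>{1..}. W i)" by auto
    with A1 show ?thesis by blast
  qed
  have R2: "rank W g = j" if "1 \<le> j" "g \<in> W' j" for g j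
    using rank_eq[OF that(1)] that sub by blast
  have free: "boundary_action_essentially_free \<nu>"
    unfolding boundary_action_essentially_free_def
  proof (intro allI impI notI)
    fix h :: 'g
    assume h: "h \<noteq> 0" and "\<exists>E. boundary_fixed_part \<nu> h E"
    then obtain E where E: "boundary_fixed_part \<nu> h E" by blast
    have Einv: "E \<in> shift_invariant_sets" and Epos: "0 < measure ?P E"
      and Efix: "\<And>B. B \<in> shift_invariant_sets \<Longrightarrow> B \<subseteq> E \<Longrightarrow>
        measure ?P ((left_translate h B - B) \<union> (B - left_translate h B)) = 0"
      using E unfolding boundary_fixed_part_def by auto
    define h' where "h' = - h"
    have h': "h' \<noteq> 0" using h unfolding h'_def by simp
    from A2 obtain N where N: "\<forall>i>N. (\<lambda>w. h' + w) ` W' i \<subseteq> W i \<and> (\<forall>w\<in>W' i. p (h' + w) = h' + p w)"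
      by blast
    have R3: "rank W (h' + w) = rank W w \<and> p (h' + w) = h' + p w" if "N < j" "w \<in> W' j" for w j
    proof -
      have j1: "1 \<le> j" using that(1) by simp
      have "h' + w \<in> W j" using N that by blast
      then have "rank W (h' + w) = j" using rank_eq[OF j1] by simp
      moreover have "rank W w = j" using R2[OF j1 that(2)] .
      moreover have "p (h' + w) = h' + p w" using N that by blast
      ultimately show ?thesis by simp
    qed
    have key: "AE z in ?P. (z \<in> B \<longleftrightarrow> (\<lambda>n. h' + z n) \<in> B)"
      if B: "B \<in> shift_invariant_sets" "B \<subseteq> E" for B
    proof -
      have Bs: "B \<in> sets traj_space" using B unfolding shift_invariant_sets_def by auto
      have lt: "left_translate h B = {z. (\<lambda>n. h' + z n) \<in> B}"
        unfolding lt_eq h'_def ..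
      define D where "D = (left_translate h B - B) \<union> (B - left_translate h B)"
      have Ds: "D \<in> sets ?P" unfolding D_def lt using trans_sets[OF Bs] Bs by auto
      have "measure ?P D = 0" unfolding D_def using Efix[OF B] .
      then have "emeasure ?P D = 0" using P.emeasure_eq_measure by simp
      then have "D \<in> null_sets ?P" using Ds by auto
      then have "AE z in ?P. z \<notin> D" by (rule AE_not_in)
      then show ?thesis unfolding D_def lt by auto
    qed
    define K where "K c = ev_set {g. anc p (rank W) g c}" for c
    define F where "F c = ev_set {g. p g = c}" for c
    have AEK: "AE z in ?P. \<forall>c. (z \<in> E \<inter> K c \<longleftrightarrow> (\<lambda>n. h' + z n) \<in> E \<inter> K c)"
      unfolding AE_all_countable
      using key[OF inv_Int[OF Einv ev_set_inv]] unfolding K_def by blast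
    have AEF: "AE z in ?P. \<forall>c. (z \<in> E \<inter> F c \<longleftrightarrow> (\<lambda>n. h' + z n) \<in> E \<inter> F c)"
      unfolding AE_all_countable
      using key[OF inv_Int[OF Einv ev_set_inv]] unfolding F_def by blast
    have AEE: "AE z in ?P. (z \<in> E \<longleftrightarrow> (\<lambda>n. h' + z n) \<in> E)"
      using key[OF Einv] by blast
    have "AE z in ?P. z \<notin> E"
      using AEK AEF AEE A3 A4 A5
    proof eventually_elim
      case (elim z)
      show "z \<notin> E"
      proof
        assume zE: "z \<in> E"
        then have hzE: "(\<lambda>n. h' + z n) \<in> E" using elim(3) by blast
        have EQ: "\<forall>c. (z \<in> ev_set {g. anc p (rank W) g c} \<longleftrightarrow> (\<lambda>n. h' + z n) \<in> ev_set {g. anc p (rank W) g c}) \<and>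
                 (z \<in> ev_set {g. p g = c} \<longleftrightarrow> (\<lambda>n. h' + z n) \<in> ev_set {g. p g = c})"
          using elim(1,2) zE hzE unfolding K_def F_def by blast
        show False
          by (rule det[where p=p and r="rank W" and Wp=W' and N=N and h=h' and z=z,
                OF R1 R2 R3 h' elim(4) elim(5) elim(6) EQ])
      qed
    qed
    moreover have "E \<in> sets ?P" using Einv unfolding shift_invariant_sets_def by auto
    ultimately have "emeasure ?P E = 0"
      using AE_iff_measurable[of E ?P "\<lambda>z. z \<notin> E"] by auto
    then have "measure ?P E = 0" by (simp add: measure_def)
    with Epos show False by simp
  qed
  have nontriv: "poisson_boundary_nontrivial \<nu>"
  proof (rule ccontr)
    assume nt: "\<not> poisson_boundary_nontrivial \<nu>"
    have m01: "measure ?P A = 0 \<or> measure ?P A = 1" if "A \<in> shift_invariant_sets" for A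
    proof -
      have "\<not> (0 < measure ?P A \<and> measure ?P A < 1)"
        using nt that unfolding poisson_boundary_nontrivial_def by blast
      moreover have "0 \<le> measure ?P A" by simp
      moreover have "measure ?P A \<le> 1" by (rule P.prob_le_1)
      ultimately show ?thesis by linarith
    qed
    obtain h :: 'g where h: "h \<noteq> 0"
    proof (rule ccontr)
      assume "\<not> thesis"
      then have all0: "\<And>g::'g. g = 0" using that by blast
      have "AE z in ?P. False"
        using A5
      proof eventually_elim
        case (elim z)
        have "range (\<lambda>i. rank W (z i)) = {rank W (0::'g)}"
          by (subst all0[of "z _"]) auto
        then show False using elim by simp
      qed
      then show False using P.AE_False by simp
    qed
    have "boundary_fixed_part \<nu> h UNIV"
      unfolding boundary_fixed_part_def
    proof (intro conjI ballI impI)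
      show "UNIV \<in> shift_invariant_sets" by (rule inv_UNIV)
      show "0 < measure ?P UNIV" using P.prob_space by simp
      fix B :: "(nat \<Rightarrow> 'g) set" assume B: "B \<in> shift_invariant_sets"
      have Bs: "B \<in> sets traj_space" using B unfolding shift_invariant_sets_def by auto
      have lt: "left_translate h B = {z. (\<lambda>n. - h + z n) \<in> B}" by (rule lt_eq)
      have lts: "left_translate h B \<in> sets ?P" unfolding lt using trans_sets[OF Bs] by simp
      have Ds: "(left_translate h B - B) \<union> (B - left_translate h B) \<in> sets ?P"
        using lts Bs by auto
      from m01[OF B] show "measure ?P ((left_translate h B - B) \<union> (B - left_translate h B)) = 0"
      proof
        assume "measure ?P B = 0"
        then have B0: "emeasure ?P B = 0" using P.emeasure_eq_measure by simp
        have "emeasure ?P (left_translate h B) = 0"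
          unfolding lt by (rule quasi[OF full_support B B0])
        then have "left_translate h B \<in> null_sets ?P" using lts by auto
        moreover have "B \<in> null_sets ?P" using B0 Bs by auto
        ultimately show ?thesis by (intro null_D[OF Ds, of "left_translate h B" B]) auto
      next
        assume B1: "measure ?P B = 1"
        define C where "C = UNIV - B"
        have C: "C \<in> shift_invariant_sets" unfolding C_def by (rule inv_compl[OF B])
        have Cs: "C \<in> sets traj_space" using C unfolding shift_invariant_sets_def by auto
        have "measure ?P C = 1 - measure ?P B"
          unfolding C_def using P.prob_compl[of B] Bs by simp
        then have "measure ?P C = 0" using B1 by simp
        then have C0: "emeasure ?P C = 0" using P.emeasure_eq_measure by simp
        have ltC: "left_translate h C = UNIV - left_translate h B"
          unfolding C_def left_translate_def by auto
        have "emeasure ?P (left_translate h C) = 0"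
          unfolding lt_eq[of h C] by (rule quasi[OF full_support C C0])
        then have "left_translate h C \<in> null_sets ?P"
          using trans_sets[OF Cs, of "-h"] lt_eq[of h C] by auto
        moreover have "C \<in> null_sets ?P" using C0 Cs by auto
        moreover have "(left_translate h B - B) \<union> (B - left_translate h B) \<subseteq> C \<union> left_translate h C"
          unfolding ltC unfolding C_def by auto
        ultimately show ?thesis
          using null_D[OF Ds, of C "left_translate h C"] by blast
      qed
    qed
    with free h show False unfolding boundary_action_essentially_free_def by blast
  qed
  from nontriv free show ?thesis by blast
qed

end
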